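(* Let $k$ be a field, $X,Y$ indeterminates, $M=Yk(X)[[Y]]$ and $R=k+M$. Then $R$ is integrally closed, but $R$ does not have the finite $t$-basic ideal property: for the finitely generated ideal $I=Y(k+kX+M)=(Y,XY)R$ and $J=YR\subseteq I$, one has $(JI)_t=(I^2)_t$ while $J_t=YR\ne M=I_t$.
   Context: For a domain $R$ with quotient field $K$ and nonzero fractional ideal $I$: $I^{-1}=(R:I)=\{x\in K:xI\subseteq R\}$, $I_v=(I^{-1})^{-1}$, $I_t=\bigcup J_v$ over finitely generated subideals $J\subseteq I$. For a nonzero ideal $I$, an ideal $J\subseteq I$ is a $t$-reduction of $I$ if $(JI^n)_t=(I^{n+1})_t$ for some integer $n\ge0$; $I$ is $t$-basic if every $t$-reduction $J$ of $I$ satisfies $J_t=I_t$. The finite $t$-basic ideal property means every nonzero finitely generated ideal is $t$-basic. *)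

theory Defs
  imports "HOL-Computational_Algebra.Computational_Algebra"
begin

definition gen :: "'a::field set \<Rightarrow> 'a set \<Rightarrow> 'a set" where
  "gen R S = {x. \<exists>F c. finite F \<and> F \<subseteq> S \<and> (\<forall>s\<in>F. c s \<in> R) \<and> x = (\<Sum>s\<in>F. c s * s)}"

definition is_subring :: "'a::field set \<Rightarrow> bool" where
  "is_subring R \<longleftrightarrow> 1 \<in> R \<and> (\<forall>x\<in>R. \<forall>y\<in>R. x + y \<in> R \<and> x - y \<in> R \<and> x * y \<in> R)"

text \<open>K (the whole type) is the quotient field of R.\<close>
definition is_quotient_field :: "'a::field set \<Rightarrow> bool" where
  "is_quotient_field R \<longleftrightarrow> (\<forall>x. \<exists>a\<in>R. \<exists>b\<in>R. b \<noteq> 0 \<and> x = a / b)"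

definition integrally_closed :: "'a::field set \<Rightarrow> bool" where
  "integrally_closed R \<longleftrightarrow>
     (\<forall>x. (\<exists>n c. (\<forall>i<n. c i \<in> R) \<and> x ^ n + (\<Sum>i<n. c i * x ^ i) = 0) \<longrightarrow> x \<in> R)"

definition is_submod :: "'a::field set \<Rightarrow> 'a set \<Rightarrow> bool" where
  "is_submod R I \<longleftrightarrow> 0 \<in> I \<and> (\<forall>x\<in>I. \<forall>y\<in>I. x + y \<in> I) \<and> (\<forall>r\<in>R. \<forall>x\<in>I. r * x \<in> I)"

definition is_ideal :: "'a::field set \<Rightarrow> 'a set \<Rightarrow> bool" where
  "is_ideal R I \<longleftrightarrow> is_submod R I \<and> I \<subseteq> R"

definition fin_gen :: "'a::field set \<Rightarrow> 'a set \<Rightarrow> bool" where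
  "fin_gen R I \<longleftrightarrow> (\<exists>S. finite S \<and> I = gen R S)"

definition iprod :: "'a::field set \<Rightarrow> 'a set \<Rightarrow> 'a set \<Rightarrow> 'a set" where
  "iprod R I J = gen R {a * b | a b. a \<in> I \<and> b \<in> J}"

primrec ipow :: "'a::field set \<Rightarrow> 'a set \<Rightarrow> nat \<Rightarrow> 'a set" where
  "ipow R I 0 = R"
| "ipow R I (Suc n) = iprod R I (ipow R I n)"

definition colon_inv :: "'a::field set \<Rightarrow> 'a set \<Rightarrow> 'a set" where
  "colon_inv R I = {x. \<forall>y\<in>I. x * y \<in> R}"

definition v_op :: "'a::field set \<Rightarrow> 'a set \<Rightarrow> 'a set" where
  "v_op R I = colon_inv R (colon_inv R I)"

definition t_op :: "'a::field set \<Rightarrow> 'a set \<Rightarrow> 'a set" where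
  "t_op R I = \<Union> {v_op R J | J. J \<subseteq> I \<and> J \<noteq> {0} \<and> is_submod R J \<and> fin_gen R J}"

definition t_reduction :: "'a::field set \<Rightarrow> 'a set \<Rightarrow> 'a set \<Rightarrow> bool" where
  "t_reduction R J I \<longleftrightarrow> is_ideal R J \<and> J \<subseteq> I \<and>
     (\<exists>n. t_op R (iprod R J (ipow R I n)) = t_op R (ipow R I (Suc n)))"

definition t_basic :: "'a::field set \<Rightarrow> 'a set \<Rightarrow> bool" where
  "t_basic R I \<longleftrightarrow> (\<forall>J. t_reduction R J I \<longrightarrow> t_op R J = t_op R I)"

definition finite_t_basic :: "'a::field set \<Rightarrow> bool" where
  "finite_t_basic R \<longleftrightarrow>
     (\<forall>I. is_ideal R I \<and> I \<noteq> {0} \<and> fin_gen R I \<longrightarrow> t_basic R I)"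

section \<open>The example: K = k(X)((Y)), M = Y k(X)[[Y]], R = k + M\<close>

definition kc :: "'k::field \<Rightarrow> 'k poly fract fls" where
  "kc c = fls_const (Fract [:c:] 1)"

definition Xe :: "'k::field poly fract fls" where
  "Xe = fls_const (Fract [:0, 1:] 1)"

definition Ye :: "'k::field poly fract fls" where
  "Ye = fls_X"

definition M_ex :: "'k::field poly fract fls set" where
  "M_ex = {Ye * fps_to_fls f | f. True}"

definition R_ex :: "'k::field poly fract fls set" where
  "R_ex = {kc c + m | c m. m \<in> M_ex}"

end

theory Submission
  imports Defs
begin
notation fls_nth (infixl "$$" 75)

lemma sum_in_submod:
  assumes "is_submod R N" "finite F" "\<forall>s\<in>F. f s \<in> N"
  shows "sum f F \<in> N"
  using assms(2,3)
proof (induction F rule: finite_induct)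
  case empty then show ?case using assms(1) by (simp add: is_submod_def)
next
  case (insert x F) then show ?case using assms(1) by (simp add: is_submod_def)
qed

lemma gen_sub:
  assumes "is_submod R N" "S \<subseteq> N"
  shows "gen R S \<subseteq> N"
proof
  fix x assume "x \<in> gen R S"
  then obtain F c where F: "finite F" "F \<subseteq> S" "\<forall>s\<in>F. c s \<in> R" "x = (\<Sum>s\<in>F. c s * s)"
    unfolding gen_def by blast
  have "\<forall>s\<in>F. c s * s \<in> N" using F assms unfolding is_submod_def by blast
  then show "x \<in> N" using sum_in_submod[OF assms(1) F(1)] F(4) by simp
qed

lemma gen_in:
  assumes "1 \<in> R" "s \<in> S"
  shows "s \<in> gen R S"
  unfolding gen_def
  by (rule CollectI, rule exI[of _ "{s}"], rule exI[of _ "\<lambda>_. 1"]) (use assms in auto)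

lemma subring_0: "is_subring R \<Longrightarrow> 0 \<in> R"
  unfolding is_subring_def by (metis diff_self)

lemma gen_submod:
  assumes "is_subring R"
  shows "is_submod R (gen R S)"
  unfolding is_submod_def
proof (intro conjI ballI)
  show "0 \<in> gen R S" unfolding gen_def by (rule CollectI, rule exI[of _ "{}"]) auto
next
  fix x y assume "x \<in> gen R S" "y \<in> gen R S"
  then obtain F c G d where F: "finite F" "F \<subseteq> S" "\<forall>s\<in>F. c s \<in> R" "x = (\<Sum>s\<in>F. c s * s)"
    and G: "finite G" "G \<subseteq> S" "\<forall>s\<in>G. d s \<in> R" "y = (\<Sum>s\<in>G. d s * s)"
    unfolding gen_def by blast
  define e where "e s = (if s \<in> F then c s else 0) + (if s \<in> G then d s else 0)" for s
  have add: "\<And>a b. a \<in> R \<Longrightarrow> b \<in> R \<Longrightarrow> a + b \<in> R" using assms unfolding is_subring_def by blast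
  have eR: "\<forall>s\<in>F \<union> G. e s \<in> R" unfolding e_def using F(3) G(3) subring_0[OF assms]
    by (intro ballI add) auto
  have xy: "x + y = (\<Sum>s\<in>F \<union> G. e s * s)"
  proof -
    have 1: "(\<Sum>s\<in>F \<union> G. (if s \<in> F then c s else 0) * s) = (\<Sum>s\<in>F. c s * s)"
      by (rule sum.mono_neutral_cong_right) (use F G in auto)
    have 2: "(\<Sum>s\<in>F \<union> G. (if s \<in> G then d s else 0) * s) = (\<Sum>s\<in>G. d s * s)"
      by (rule sum.mono_neutral_cong_right) (use F G in auto)
    have "(\<Sum>s\<in>F \<union> G. e s * s) = (\<Sum>s\<in>F \<union> G. (if s \<in> F then c s else 0) * s) + (\<Sum>s\<in>F \<union> G. (if s \<in> G then d s else 0) * s)"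
      unfolding e_def distrib_right by (rule sum.distrib)
    then show ?thesis using 1 2 F(4) G(4) by simp
  qed
  show "x + y \<in> gen R S" unfolding gen_def
    by (rule CollectI, rule exI[of _ "F \<union> G"], rule exI[of _ e]) (use F G eR xy in auto)
next
  fix r x assume r: "r \<in> R" and "x \<in> gen R S"
  then obtain F c where F: "finite F" "F \<subseteq> S" "\<forall>s\<in>F. c s \<in> R" "x = (\<Sum>s\<in>F. c s * s)"
    unfolding gen_def by blast
  have rx: "r * x = (\<Sum>s\<in>F. (r * c s) * s)" using F(4) by (simp add: sum_distrib_left mult.assoc)
  have rc: "\<forall>s\<in>F. r * c s \<in> R" using F(3) r assms unfolding is_subring_def by blast
  show "r * x \<in> gen R S" unfolding gen_def
    by (rule CollectI, rule exI[of _ F], rule exI[of _ "\<lambda>s. r * c s"]) (use F rx rc in auto)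
qed

lemma colon_anti: "A \<subseteq> B \<Longrightarrow> colon_inv R B \<subseteq> colon_inv R A"
  unfolding colon_inv_def by blast

lemma v_mono: "A \<subseteq> B \<Longrightarrow> v_op R A \<subseteq> v_op R B"
  unfolding v_op_def by (intro colon_anti)

lemma t_fg:
  assumes "is_submod R A" "fin_gen R A" "A \<noteq> {0}"
  shows "t_op R A = v_op R A"
  unfolding t_op_def
proof
  show "\<Union> {v_op R J | J. J \<subseteq> A \<and> J \<noteq> {0} \<and> is_submod R J \<and> fin_gen R J} \<subseteq> v_op R A"
    using v_mono by blast
  show "v_op R A \<subseteq> \<Union> {v_op R J | J. J \<subseteq> A \<and> J \<noteq> {0} \<and> is_submod R J \<and> fin_gen R J}"
    using assms by blast
qed


definition W :: "int \<Rightarrow> 'b::field fls set" where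
  "W e = {x. \<forall>n<e. x $$ n = 0}"

definition NL :: "'b::field set \<Rightarrow> int \<Rightarrow> 'b fls set" where
  "NL L d = {x. x \<in> W d \<and> x $$ d \<in> L}"

lemma W_mult:
  assumes "x \<in> W a" "y \<in> W b"
  shows "x * y \<in> W (a + b) \<and> (x * y) $$ (a + b) = x $$ a * y $$ b"
proof (cases "x = 0 \<or> y = 0")
  case True then show ?thesis by (auto simp: W_def)
next
  case False
  then have nz: "x \<noteq> 0" "y \<noteq> 0" by auto
  have sa: "a \<le> fls_subdegree x" using assms(1) nz by (intro fls_subdegree_geI) (auto simp: W_def)
  have sb: "b \<le> fls_subdegree y" using assms(2) nz by (intro fls_subdegree_geI) (auto simp: W_def)
  have 1: "x * y \<in> W (a + b)" unfolding W_def using sa sb by (auto intro: fls_times_nth_eq0)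
  have 2: "(x * y) $$ (a + b) = x $$ a * y $$ b"
  proof (cases "a = fls_subdegree x \<and> b = fls_subdegree y")
    case True then show ?thesis by (simp add: fls_times_nth(4))
  next
    case False
    then have "a + b < fls_subdegree x + fls_subdegree y" using sa sb by auto
    moreover have "x $$ a * y $$ b = 0" using False sa sb by (cases "a < fls_subdegree x") auto
    ultimately show ?thesis by (simp add: fls_times_nth_eq0)
  qed
  show ?thesis using 1 2 by blast
qed

lemma W_mono: "a \<le> b \<Longrightarrow> W b \<subseteq> W a"
  unfolding W_def by auto

lemma W_add: "x \<in> W a \<Longrightarrow> y \<in> W a \<Longrightarrow> x + y \<in> W a"
  unfolding W_def by auto

lemma W_diff: "x \<in> W a \<Longrightarrow> y \<in> W a \<Longrightarrow> x - y \<in> W a"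
  unfolding W_def by auto

lemma W_sum: "finite A \<Longrightarrow> (\<forall>i\<in>A. f i \<in> W a) \<Longrightarrow> sum f A \<in> W a"
  unfolding W_def by (auto simp: fls_nth_sum)

lemma W_pow:
  assumes "x \<in> W s"
  shows "x ^ i \<in> W (int i * s) \<and> (x ^ i) $$ (int i * s) = (x $$ s) ^ i"
proof (induction i)
  case 0 then show ?case by (auto simp: W_def)
next
  case (Suc i)
  have "x * x ^ i \<in> W (s + int i * s) \<and> (x * x ^ i) $$ (s + int i * s) = x $$ s * (x ^ i) $$ (int i * s)"
    using W_mult[OF assms] Suc by blast
  moreover have "s + int i * s = int (Suc i) * s" by (simp add: algebra_simps)
  ultimately show ?case using Suc by simp
qed

lemma shift_nth: "((x::'b::field fls) * fls_X_intpow d) $$ n = x $$ (n - d)"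
  by (simp add: fls_X_intpow_times_conv_shift)

lemma shift_nth': "(fls_X_intpow d * (x::'b::field fls)) $$ n = x $$ (n - d)"
  by (simp add: fls_X_intpow_times_conv_shift)

lemma intpow_nth: "(fls_X_intpow d :: 'b::field fls) $$ n = (if n = d then 1 else 0)"
  by simp

lemma intpow_inv: "(fls_X_intpow (-d) :: 'b::field fls) * fls_X_intpow d = 1"
  by (rule fls_eqI) (simp only: shift_nth, simp)

lemma fls_X_intpow1: "(fls_X :: 'b::field fls) = fls_X_intpow 1"
  by (simp add: fls_X_conv_shift_1)


definition K0 :: "'k::field poly fract set" where
  "K0 = {Fract [:c:] 1 | c. True}"

definition xx :: "'k::field poly fract" where
  "xx = Fract [:0, 1:] 1"

definition L1 :: "'k::field poly fract set" where
  "L1 = {u + v * xx | u v. u \<in> K0 \<and> v \<in> K0}"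

definition L2 :: "'k::field poly fract set" where
  "L2 = {u + v * xx + w * (xx * xx) | u v w. u \<in> K0 \<and> v \<in> K0 \<and> w \<in> K0}"

lemma K0I: "Fract [:c:] 1 \<in> K0" unfolding K0_def by blast
lemma K0E: "a \<in> K0 \<Longrightarrow> (\<And>c. a = Fract [:c:] 1 \<Longrightarrow> P) \<Longrightarrow> P" unfolding K0_def by blast
lemma K0_0: "0 \<in> K0" using K0I[of 0] by (simp add: Zero_fract_def)
lemma K0_1: "1 \<in> K0" using K0I[of 1] by (simp add: One_fract_def one_pCons)
lemma K0_add: "a \<in> K0 \<Longrightarrow> b \<in> K0 \<Longrightarrow> a + b \<in> K0"
  by (elim K0E) (simp add: K0I[of "_ + _", simplified])
lemma K0_diff: "a \<in> K0 \<Longrightarrow> b \<in> K0 \<Longrightarrow> a - b \<in> K0"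
  by (elim K0E) (simp add: K0I[of "_ - _", simplified])
lemma K0_mult: "a \<in> K0 \<Longrightarrow> b \<in> K0 \<Longrightarrow> a * b \<in> K0"
  by (elim K0E) (simp add: K0I[of "_ * _", simplified])

lemma xx_notin: "xx \<notin> K0"
  unfolding K0_def xx_def by (auto simp: eq_fract)

lemma K0_xx: "c \<in> K0 \<Longrightarrow> c \<noteq> 0 \<Longrightarrow> c * xx \<notin> K0"
  unfolding K0_def xx_def by (auto simp: eq_fract Zero_fract_def)

lemma good_L:
  assumes "1 \<in> L" "xx \<in> L" "a \<noteq> 0"
  shows "\<exists>z\<in>L. a * z \<notin> K0"
proof (cases "a \<in> K0")
  case True then show ?thesis using assms K0_xx by blast
next
  case False then show ?thesis using assms(1) by (intro bexI[of _ 1]) auto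
qed

lemma good_UNIV: "a \<noteq> 0 \<Longrightarrow> \<exists>z\<in>UNIV. a * z \<notin> K0"
  using xx_notin by (intro bexI[of _ "xx / a"]) auto

lemma K0_L1: "K0 \<subseteq> L1"
  unfolding L1_def using K0_0 by force
lemma L1_L2: "L1 \<subseteq> L2"
  unfolding L1_def L2_def using K0_0 by force
lemma one_L1: "1 \<in> L1" using K0_L1 K0_1 by blast
lemma xx_L1: "xx \<in> L1" unfolding L1_def using K0_0 K0_1 by force
lemma L1_0: "0 \<in> L1" using K0_L1 K0_0 by blast
lemma L2_0: "0 \<in> L2" using L1_L2 L1_0 by blast

lemma L1I: "u \<in> K0 \<Longrightarrow> v \<in> K0 \<Longrightarrow> u + v * xx \<in> L1" unfolding L1_def by blast
lemma L1E: "a \<in> L1 \<Longrightarrow> (\<And>u v. u \<in> K0 \<Longrightarrow> v \<in> K0 \<Longrightarrow> a = u + v * xx \<Longrightarrow> P) \<Longrightarrow> P"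
  unfolding L1_def by blast
lemma L2I: "u \<in> K0 \<Longrightarrow> v \<in> K0 \<Longrightarrow> w \<in> K0 \<Longrightarrow> u + v * xx + w * (xx * xx) \<in> L2"
  unfolding L2_def by blast

lemma L2E: "a \<in> L2 \<Longrightarrow> (\<And>u v w. u \<in> K0 \<Longrightarrow> v \<in> K0 \<Longrightarrow> w \<in> K0 \<Longrightarrow> a = u + v * xx + w * (xx * xx) \<Longrightarrow> P) \<Longrightarrow> P"
  unfolding L2_def by blast

lemma L1_add: "a \<in> L1 \<Longrightarrow> b \<in> L1 \<Longrightarrow> a + b \<in> L1"
proof (elim L1E)
  fix u v u' v' assume h: "u \<in> K0" "v \<in> K0" "a = u + v * xx" "u' \<in> K0" "v' \<in> K0" "b = u' + v' * xx"
  then have e: "a + b = (u + u') + (v + v') * xx" by (simp add: algebra_simps)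
  show "a + b \<in> L1" unfolding e by (intro L1I K0_add h)
qed

lemma L2_add: "a \<in> L2 \<Longrightarrow> b \<in> L2 \<Longrightarrow> a + b \<in> L2"
proof (elim L2E)
  fix u v w u' v' w' assume h: "u \<in> K0" "v \<in> K0" "w \<in> K0" "a = u + v * xx + w * (xx * xx)"
    "u' \<in> K0" "v' \<in> K0" "w' \<in> K0" "b = u' + v' * xx + w' * (xx * xx)"
  then have e: "a + b = (u + u') + (v + v') * xx + (w + w') * (xx * xx)" by (simp add: algebra_simps)
  show "a + b \<in> L2" unfolding e by (intro L2I K0_add h)
qed

lemma L1_mult: "c \<in> K0 \<Longrightarrow> a \<in> L1 \<Longrightarrow> c * a \<in> L1"
proof (elim L1E)
  fix u v assume h: "u \<in> K0" "v \<in> K0" "a = u + v * xx" "c \<in> K0"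
  then have e: "c * a = c * u + (c * v) * xx" by (simp add: algebra_simps)
  show "c * a \<in> L1" unfolding e by (intro L1I K0_mult h)
qed

lemma L2_mult: "c \<in> K0 \<Longrightarrow> a \<in> L2 \<Longrightarrow> c * a \<in> L2"
proof (elim L2E)
  fix u v w assume h: "u \<in> K0" "v \<in> K0" "w \<in> K0" "a = u + v * xx + w * (xx * xx)" "c \<in> K0"
  then have e: "c * a = c * u + (c * v) * xx + (c * w) * (xx * xx)" by (simp add: algebra_simps)
  show "c * a \<in> L2" unfolding e by (intro L2I K0_mult h)
qed

lemma L1_L1: "a \<in> L1 \<Longrightarrow> b \<in> L1 \<Longrightarrow> a * b \<in> L2"
proof (elim L1E)
  fix u v u' v' assume h: "u \<in> K0" "v \<in> K0" "a = u + v * xx" "u' \<in> K0" "v' \<in> K0" "b = u' + v' * xx"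
  then have e: "a * b = u * u' + (u * v' + v * u') * xx + (v * v') * (xx * xx)" by (simp add: algebra_simps)
  show "a * b \<in> L2" unfolding e by (intro L2I K0_add K0_mult h)
qed

lemma bezout_poly:
  fixes p q :: "'k::field poly"
  assumes "q \<noteq> 0"
  shows "\<exists>g p' q' u v. p = g * p' \<and> q = g * q' \<and> u * p' + v * q' = 1"
proof -
  define E where "E = {h. h \<noteq> 0 \<and> (\<exists>u v. h = u * p + v * q)}"
  have "q \<in> E" unfolding E_def using assms by (auto intro: exI[of _ 0] exI[of _ 1])
  then obtain g where gE: "g \<in> E" and gmin: "\<And>h. h \<in> E \<Longrightarrow> degree g \<le> degree h"
    using ex_has_least_nat[of "\<lambda>h. h \<in> E" q degree] by blast
  obtain u v where g: "g \<noteq> 0" "g = u * p + v * q" using gE unfolding E_def by blast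
  have dv: "g dvd f" if fex: "\<exists>a b. f = a * p + b * q" for f
  proof (rule ccontr)
    assume nd: "\<not> g dvd f"
    obtain a b where f: "f = a * p + b * q" using fex by blast
    have r0: "f mod g \<noteq> 0" using nd by (simp add: dvd_eq_mod_eq_0)
    have "f mod g = f - (f div g) * g" by (simp add: minus_div_mult_eq_mod)
    also have "\<dots> = (a - f div g * u) * p + (b - f div g * v) * q" using f g(2) by (simp add: algebra_simps)
    finally have "f mod g \<in> E" unfolding E_def using r0 by blast
    then have "degree g \<le> degree (f mod g)" by (rule gmin)
    moreover have "degree (f mod g) < degree g" by (rule degree_mod_less'[OF g(1) r0])
    ultimately show False by simp
  qed
  have "g dvd p" by (rule dv) (auto intro: exI[of _ 1] exI[of _ 0])
  then obtain p' where p': "p = g * p'" by (elim dvdE)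
  have "g dvd q" by (rule dv) (auto intro: exI[of _ 1] exI[of _ 0])
  then obtain q' where q': "q = g * q'" by (elim dvdE)
  have "g * (u * p' + v * q') = g * 1" using g(2) p' q' by (simp add: algebra_simps)
  then have "u * p' + v * q' = 1" using g(1) by simp
  then show ?thesis using p' q' by blast
qed

lemma tp: "to_fract (x ^ m) = to_fract x ^ m"
  by (induction m) auto

lemma ts: "to_fract (smult c x) = to_fract [:c:] * to_fract x"
  by (subst to_fract_mult[symmetric]) simp

lemma alg_int_poly:
  fixes a :: "'k::field poly fract"
  assumes eq: "a ^ n + (\<Sum>i<n. Fract [:d i:] 1 * a ^ i) = 0"
  shows "\<exists>p. a = to_fract p"
proof -
  obtain p0 q0 where a0: "a = Fract p0 q0" and q00: "q0 \<noteq> 0" by (cases a) auto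
  obtain g p q u v where gpq: "p0 = g * p" "q0 = g * q" and bz: "u * p + v * q = 1"
    using bezout_poly[OF q00, of p0] by blast
  have g0: "g \<noteq> 0" and q0: "q \<noteq> 0" using q00 gpq by auto
  have "a = Fract p q" using a0 gpq g0 by (simp add: mult_fract_cancel)
  then have aq: "a * to_fract q = to_fract p" using q0 by (simp add: Fract_conv_to_fract)
  have n0: "n \<noteq> 0" using eq by (cases n) auto
  define P where "P = p ^ n + (\<Sum>i<n. [:d i:] * p ^ i * q ^ (n - i))"
  have pw: "a ^ i * to_fract q ^ n = to_fract p ^ i * to_fract q ^ (n - i)" if "i \<le> n" for i
  proof -
    have "to_fract q ^ n = to_fract q ^ i * to_fract q ^ (n - i)"
      using that by (simp add: power_add[symmetric])
    then show ?thesis using aq by (simp add: power_mult_distrib[symmetric] mult.assoc)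
  qed
  have "to_fract P = (a ^ n + (\<Sum>i<n. Fract [:d i:] 1 * a ^ i)) * to_fract q ^ n"
    unfolding P_def distrib_right sum_distrib_right
    by (simp add: tp pw ts mult.assoc to_fract_def[symmetric])
  then have P0: "P = 0" using eq by simp
  have "q dvd (\<Sum>i<n. [:d i:] * p ^ i * q ^ (n - i))"
  proof (rule dvd_sum)
    fix i assume "i \<in> {..<n}"
    then have "q dvd q ^ (n - i)" by (intro dvd_power) auto
    then show "q dvd [:d i:] * p ^ i * q ^ (n - i)" by (rule dvd_mult)
  qed
  then have qn: "q dvd p ^ n" using P0 unfolding P_def by (metis add_eq_0_iff dvd_minus_iff)
  have "q dvd p ^ (n - m)" for m
  proof (induction m)
    case 0 then show ?case using qn by simp
  next
    case (Suc m)
    show ?case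
    proof (cases "n - m = 0")
      case True then show ?thesis using Suc by simp
    next
      case False
      then have e: "n - m = Suc (n - Suc m)" by simp
      have "p ^ (n - Suc m) = p ^ (n - Suc m) * (u * p + v * q)" using bz by simp
      also have "\<dots> = u * p ^ (n - m) + q * (v * p ^ (n - Suc m))" unfolding e by (simp add: algebra_simps)
      finally have eq2: "p ^ (n - Suc m) = u * p ^ (n - m) + q * (v * p ^ (n - Suc m))" .
      show ?thesis by (subst eq2) (intro dvd_add dvd_mult Suc.IH dvd_triv_left)
    qed
  qed
  from this[of n] have "q dvd 1" by simp
  then obtain w where w: "1 = q * w" by (elim dvdE)
  have "a = a * (to_fract q * to_fract w)" using w by (metis mult_1_right to_fract_1 to_fract_mult)
  also have "\<dots> = to_fract (p * w)" using aq by (simp add: mult.assoc[symmetric])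
  finally show ?thesis by blast
qed

lemma alg_int:
  fixes a :: "'k::field poly fract"
  assumes eq: "a ^ n + (\<Sum>i<n. Fract [:d i:] 1 * a ^ i) = 0"
  shows "a \<in> K0"
proof -
  obtain p where ap: "a = to_fract p" using alg_int_poly[OF eq] by blast
  have n0: "n \<noteq> 0" using eq by (cases n) auto
  have "to_fract (p ^ n + (\<Sum>i<n. smult (d i) (p ^ i))) = 0"
    using eq unfolding ap by (simp add: tp ts to_fract_def[symmetric])
  then have Pp: "p ^ n + (\<Sum>i<n. smult (d i) (p ^ i)) = 0" using to_fract_eq_0_iff by blast
  have "degree p = 0"
  proof (rule ccontr)
    assume dp: "degree p \<noteq> 0"
    then have pn0: "p \<noteq> 0" by auto
    have "degree (\<Sum>i<n. smult (d i) (p ^ i)) \<le> (n - 1) * degree p"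
    proof (rule degree_sum_le)
      fix i assume "i \<in> {..<n}"
      then have "degree (smult (d i) (p ^ i)) \<le> i * degree p"
        using degree_smult_le[of "d i" "p ^ i"] degree_power_le[of p i] by (simp add: mult.commute)
      also have "\<dots> \<le> (n - 1) * degree p" using \<open>i \<in> {..<n}\<close> by (intro mult_right_mono) auto
      finally show "degree (smult (d i) (p ^ i)) \<le> (n - 1) * degree p" .
    qed simp
    moreover have "p ^ n = - (\<Sum>i<n. smult (d i) (p ^ i))" using Pp by (simp add: eq_neg_iff_add_eq_0)
    then have "degree (p ^ n) = degree (\<Sum>i<n. smult (d i) (p ^ i))" by simp
    moreover have "degree (p ^ n) = n * degree p" by (simp add: degree_power_eq pn0)
    ultimately have "n * degree p \<le> (n - 1) * degree p" by simp
    then show False using dp n0 by simp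
  qed
  then obtain c where "p = [:c:]" by (metis degree_eq_zeroE)
  then have "a = Fract [:c:] 1" using ap by (simp add: to_fract_def)
  then show ?thesis by (rule ssubst) (rule K0I)
qed


abbreviation RR :: "'k::field poly fract fls set" where "RR \<equiv> NL K0 0"

lemma Xe_def': "Xe = fls_const xx" by (simp add: Xe_def xx_def)
lemma kc_def': "kc c = fls_const (Fract [:c:] 1)" by (simp add: kc_def)

lemma M_char: "(M_ex :: 'k::field poly fract fls set) = W 1"
proof
  show "(M_ex :: 'k poly fract fls set) \<subseteq> W 1" unfolding M_ex_def W_def Ye_def by (auto simp: fls_X_times_conv_shift)
  show "W 1 \<subseteq> (M_ex :: 'k poly fract fls set)"
  proof
    fix x :: "'k poly fract fls" assume x: "x \<in> W 1"
    have "x = fls_X * fps_to_fls (fls_regpart (fls_shift 1 x))"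
      using x unfolding W_def by (intro fls_eqI) (auto simp: fls_X_times_conv_shift)
    then show "x \<in> M_ex" unfolding M_ex_def Ye_def by blast
  qed
qed

lemma R_char: "(R_ex :: 'k::field poly fract fls set) = RR"
proof
  show "(R_ex :: 'k poly fract fls set) \<subseteq> RR"
  proof
    fix x :: "'k poly fract fls" assume "x \<in> R_ex"
    then obtain c m where x: "x = kc c + m" "m \<in> W 1" unfolding R_ex_def M_char by blast
    show "x \<in> RR" using x unfolding NL_def W_def kc_def' by (auto intro: K0I)
  qed
  show "RR \<subseteq> (R_ex :: 'k poly fract fls set)"
  proof
    fix x :: "'k poly fract fls" assume x: "x \<in> RR"
    then obtain c where c: "x $$ 0 = Fract [:c:] 1" unfolding NL_def by (auto elim: K0E)
    have "x - kc c \<in> W 1" using x c unfolding NL_def W_def kc_def' by auto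
    moreover have "x = kc c + (x - kc c)" by simp
    ultimately show "x \<in> R_ex" unfolding R_ex_def M_char by blast
  qed
qed

lemma W_sub_RR: "e \<ge> 1 \<Longrightarrow> W e \<subseteq> RR"
  unfolding NL_def W_def using K0_0 by auto

lemma NL_W: "x \<in> NL L d \<Longrightarrow> x \<in> W d" unfolding NL_def by auto

lemma W_NL: "W e = NL UNIV e" unfolding NL_def by auto

lemma RR_subring: "is_subring (RR :: 'k::field poly fract fls set)"
  unfolding is_subring_def
proof (intro conjI ballI)
  show "1 \<in> RR" unfolding NL_def W_def using K0_1 by auto
  fix x y :: "'k poly fract fls" assume x: "x \<in> RR" and y: "y \<in> RR"
  show "x + y \<in> RR" using x y unfolding NL_def W_def by (auto intro: K0_add)
  show "x - y \<in> RR" using x y unfolding NL_def W_def by (auto intro: K0_diff)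
  have "x * y \<in> W (0 + 0) \<and> (x * y) $$ (0 + 0) = x $$ 0 * y $$ 0"
    using x y by (intro W_mult) (auto simp: NL_def)
  moreover have "x $$ 0 * y $$ 0 \<in> K0" using x y unfolding NL_def by (blast intro: K0_mult)
  ultimately show "x * y \<in> RR" unfolding NL_def by simp
qed

lemma NL_submod:
  assumes "0 \<in> L" "\<And>a b. a \<in> L \<Longrightarrow> b \<in> L \<Longrightarrow> a + b \<in> L" "\<And>c a. c \<in> K0 \<Longrightarrow> a \<in> L \<Longrightarrow> c * a \<in> L"
  shows "is_submod RR (NL L d :: 'k::field poly fract fls set)"
  unfolding is_submod_def
proof (intro conjI ballI)
  show "0 \<in> NL L d" unfolding NL_def W_def using assms(1) by auto
  fix x y :: "'k poly fract fls" assume x: "x \<in> NL L d" and y: "y \<in> NL L d"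
  show "x + y \<in> NL L d" using x y assms(2) unfolding NL_def W_def by auto
next
  fix r x :: "'k poly fract fls" assume r: "r \<in> RR" and x: "x \<in> NL L d"
  have "r * x \<in> W (0 + d) \<and> (r * x) $$ (0 + d) = r $$ 0 * x $$ d"
    using r x by (intro W_mult) (auto simp: NL_def)
  moreover have "r $$ 0 * x $$ d \<in> L" using r x assms(3) unfolding NL_def by blast
  ultimately show "r * x \<in> NL L d" unfolding NL_def by simp
qed

lemma submod_K0: "is_submod RR (NL K0 d)" by (rule NL_submod) (auto intro: K0_0 K0_add K0_mult)
lemma submod_L1: "is_submod RR (NL L1 d)" by (rule NL_submod) (auto intro: L1_0 L1_add L1_mult)
lemma submod_L2: "is_submod RR (NL L2 d)" by (rule NL_submod) (auto intro: L2_0 L2_add L2_mult)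
lemma submod_W: "is_submod RR (W d)" unfolding W_NL by (rule NL_submod) auto

lemma colon1:
  assumes "0 \<in> L" "\<And>a. a \<noteq> 0 \<Longrightarrow> \<exists>z\<in>L. a * z \<notin> K0"
  shows "colon_inv RR (NL L d) = (W (1 - d) :: 'k::field poly fract fls set)"
proof
  show "W (1 - d) \<subseteq> colon_inv RR (NL L d)"
  proof
    fix x :: "'k poly fract fls" assume x: "x \<in> W (1 - d)"
    have "\<forall>y\<in>NL L d. x * y \<in> RR"
    proof
      fix y :: "'k poly fract fls" assume "y \<in> NL L d"
      then have "x * y \<in> W (1 - d + d)" using W_mult[OF x NL_W] by blast
      then have "x * y \<in> W 1" by simp
      then show "x * y \<in> RR" using W_sub_RR[of 1] by blast
    qed
    then show "x \<in> colon_inv RR (NL L d)" unfolding colon_inv_def by blast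
  qed
  show "colon_inv RR (NL L d) \<subseteq> (W (1 - d) :: 'k poly fract fls set)"
  proof
    fix x :: "'k poly fract fls" assume x: "x \<in> colon_inv RR (NL L d)"
    show "x \<in> W (1 - d)" unfolding W_def
    proof (rule CollectI, intro allI impI, rule ccontr)
      fix n assume n: "n < 1 - d" and xn: "x $$ n \<noteq> 0"
      then have x0: "x \<noteq> 0" by auto
      define n0 where "n0 = fls_subdegree x"
      have "n0 \<le> n" using xn unfolding n0_def by (meson fls_eq0_below_subdegree not_le)
      define a where "a = x $$ n0"
      have a0: "a \<noteq> 0" using x0 unfolding a_def n0_def by simp
      obtain z where z: "z \<in> L" "a * z \<notin> K0" using assms(2)[OF a0] by blast
      define y where "y = fls_const z * fls_X_intpow (- n0)"
      have yn: "y $$ m = (if m = - n0 then z else 0)" for m unfolding y_def by simp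
      have "y \<in> NL L d" unfolding NL_def W_def using yn \<open>n0 \<le> n\<close> n z(1) assms(1) by auto
      then have "x * y \<in> RR" using x unfolding colon_inv_def by blast
      moreover have "(x * y) $$ 0 = z * a"
      proof -
        have eq: "x * y = fls_const z * (x * fls_X_intpow (- n0))" unfolding y_def by (simp add: algebra_simps)
        show ?thesis unfolding a_def eq fls_mult_const_nth shift_nth by simp
      qed
      ultimately show False using z(2) unfolding NL_def by (simp add: mult.commute)
    qed
  qed
qed

lemma colon2: "colon_inv RR (NL K0 d) = (NL K0 (- d) :: 'k::field poly fract fls set)"
proof
  show "NL K0 (- d) \<subseteq> colon_inv RR (NL K0 d :: 'k poly fract fls set)"
  proof
    fix x :: "'k poly fract fls" assume x: "x \<in> NL K0 (- d)"
    have "\<forall>y\<in>NL K0 d. x * y \<in> RR"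
    proof
      fix y :: "'k poly fract fls" assume y: "y \<in> NL K0 d"
      then have "x * y \<in> W (- d + d) \<and> (x * y) $$ (- d + d) = x $$ (- d) * y $$ d" using W_mult[OF NL_W[OF x] NL_W] by blast
      moreover have "x $$ (- d) * y $$ d \<in> K0" using x y unfolding NL_def by (blast intro: K0_mult)
      ultimately show "x * y \<in> RR" unfolding NL_def by simp
    qed
    then show "x \<in> colon_inv RR (NL K0 d)" unfolding colon_inv_def by blast
  qed
  show "colon_inv RR (NL K0 d) \<subseteq> (NL K0 (- d) :: 'k poly fract fls set)"
  proof
    fix x :: "'k poly fract fls" assume x: "x \<in> colon_inv RR (NL K0 d)"
    have "fls_X_intpow d \<in> NL K0 d" unfolding NL_def W_def using K0_1 by simp
    then have "x * fls_X_intpow d \<in> RR" using x unfolding colon_inv_def by blast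
    then have h: "\<forall>m<0. x $$ (m - d) = 0" "x $$ (0 - d) \<in> K0" unfolding NL_def W_def by (auto simp: shift_nth)
    have "\<forall>m< - d. x $$ m = 0"
    proof (intro allI impI)
      fix m assume "m < - d" then show "x $$ m = 0" using h(1)[rule_format, of "m + d"] by simp
    qed
    then show "x \<in> NL K0 (- d)" using h(2) unfolding NL_def W_def by simp
  qed
qed

lemma colonL1: "colon_inv RR (NL L1 d) = W (1 - d)"
  by (rule colon1) (auto intro: L1_0 good_L one_L1 xx_L1)
lemma colonL2: "colon_inv RR (NL L2 d) = W (1 - d)"
  using L1_L2 by (intro colon1) (auto intro: L2_0 good_L one_L1 xx_L1)
lemma colonW: "colon_inv RR (W d) = W (1 - d)"
  unfolding W_NL[of d] by (rule colon1) (auto dest: good_UNIV)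


abbreviation PP :: "int \<Rightarrow> 'k::field poly fract fls" where "PP d \<equiv> fls_X_intpow d"

lemma Ye_P: "(Ye :: 'k::field poly fract fls) = PP 1"
  unfolding Ye_def by (rule fls_X_intpow1)

lemma P_mult: "PP a * PP b = (PP (a + b) :: 'k::field poly fract fls)"
  by (rule fls_X_intpow_times_fls_X_intpow)

lemma P_inv: "x * PP (- d) * PP d = (x :: 'k::field poly fract fls)"
  by (simp only: mult.assoc intpow_inv mult_1_right)

lemma shift_nth2: "((x::'b::field fls) * fls_shift m 1) $$ n = x $$ (n + m)"
  using shift_nth[of x "- m" n] by simp

lemma NL_mono: "L \<subseteq> L' \<Longrightarrow> NL L d \<subseteq> NL L' d"
  unfolding NL_def by auto

lemma P_in: "(PP d :: 'k::field poly fract fls) \<in> NL K0 d"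
  unfolding NL_def W_def using K0_1 by simp

lemma XeP_in: "Xe * (PP d :: 'k::field poly fract fls) \<in> NL L1 d"
  unfolding NL_def W_def Xe_def' using xx_L1 by simp

lemma XXP_in: "Xe * Xe * (PP d :: 'k::field poly fract fls) \<in> NL L2 d"
proof -
  have "xx * xx \<in> L2" using L2I[of 0 0 1] K0_0 K0_1 by simp
  then show ?thesis unfolding NL_def W_def Xe_def' by simp
qed

lemma const_RR: "v \<in> K0 \<Longrightarrow> fls_const v \<in> (RR :: 'k::field poly fract fls set)"
  unfolding NL_def W_def by simp

lemma NL_shift: "t \<in> NL L e \<Longrightarrow> t * PP d \<in> (NL L (e + d) :: 'k::field poly fract fls set)"
  unfolding NL_def W_def by (simp add: shift_nth)

lemma submod_closed:
  assumes "is_submod R G"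
  shows "r \<in> R \<Longrightarrow> x \<in> G \<Longrightarrow> r * x \<in> G" "x \<in> G \<Longrightarrow> y \<in> G \<Longrightarrow> x + y \<in> G"
  using assms unfolding is_submod_def by auto

lemma D0:
  assumes G: "is_submod RR G" and P: "PP d \<in> G"
  shows "NL K0 d \<subseteq> (G :: 'k::field poly fract fls set)"
proof
  fix x :: "'k poly fract fls" assume x: "x \<in> NL K0 d"
  have r: "x * PP (- d) \<in> RR" using NL_shift[OF x, of "- d"] by simp
  show "x \<in> G" using submod_closed(1)[OF G r P] unfolding P_inv .
qed

lemma D1:
  assumes G: "is_submod RR G" and P: "PP d \<in> G" and XP: "Xe * PP d \<in> G"
  shows "NL L1 d \<subseteq> (G :: 'k::field poly fract fls set)"
proof
  fix x :: "'k poly fract fls" assume x: "x \<in> NL L1 d"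
  then have "x $$ d \<in> L1" unfolding NL_def by simp
  then obtain u v where uv: "u \<in> K0" "v \<in> K0" "x $$ d = u + v * xx" by (elim L1E)
  define r where "r = x * PP (- d) - fls_const v * Xe"
  have "r \<in> RR" unfolding r_def NL_def W_def Xe_def' using x uv unfolding NL_def W_def
    by (auto simp: shift_nth2)
  then have 1: "r * PP d \<in> G" using submod_closed(1)[OF G _ P] by blast
  have 2: "fls_const v * (Xe * PP d) \<in> G" using submod_closed(1)[OF G const_RR[OF uv(2)] XP] .
  have "r * PP d + fls_const v * (Xe * PP d) = (r + fls_const v * Xe) * PP d" by (simp add: algebra_simps)
  also have "r + fls_const v * Xe = x * PP (- d)" unfolding r_def by simp
  also have "x * PP (- d) * PP d = x" by (rule P_inv)
  finally show "x \<in> G" using submod_closed(2)[OF G 1 2] by simp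
qed

lemma D2:
  assumes G: "is_submod RR G" and P: "PP d \<in> G" and XP: "Xe * PP d \<in> G" and XXP: "Xe * Xe * PP d \<in> G"
  shows "NL L2 d \<subseteq> (G :: 'k::field poly fract fls set)"
proof
  fix x :: "'k poly fract fls" assume x: "x \<in> NL L2 d"
  then have "x $$ d \<in> L2" unfolding NL_def by simp
  then obtain u v w where uv: "u \<in> K0" "v \<in> K0" "w \<in> K0" "x $$ d = u + v * xx + w * (xx * xx)" by (elim L2E)
  define r where "r = x * PP (- d) - fls_const v * Xe - fls_const w * (Xe * Xe)"
  have "r \<in> RR" unfolding r_def NL_def W_def Xe_def' using x uv unfolding NL_def W_def
    by (auto simp: shift_nth2)
  then have 1: "r * PP d \<in> G" using submod_closed(1)[OF G _ P] by blast
  have 2: "fls_const v * (Xe * PP d) \<in> G" using submod_closed(1)[OF G const_RR[OF uv(2)] XP] .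
  have 3: "fls_const w * (Xe * Xe * PP d) \<in> G" using submod_closed(1)[OF G const_RR[OF uv(3)] XXP] .
  have "r * PP d + fls_const v * (Xe * PP d) + fls_const w * (Xe * Xe * PP d)
      = (r + fls_const v * Xe + fls_const w * (Xe * Xe)) * PP d" by (simp add: algebra_simps)
  also have "r + fls_const v * Xe + fls_const w * (Xe * Xe) = x * PP (- d)" unfolding r_def by simp
  also have "x * PP (- d) * PP d = x" by (rule P_inv)
  finally show "x \<in> G" using submod_closed(2)[OF G submod_closed(2)[OF G 1 2] 3] by simp
qed


abbreviation JJ :: "'k::field poly fract fls set" where "JJ \<equiv> NL K0 1"
abbreviation II :: "'k::field poly fract fls set" where "II \<equiv> NL L1 1"

lemma P2: "PP 2 = (Ye * Ye :: 'k::field poly fract fls)"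
  unfolding Ye_P P_mult by simp

lemma J_eq: "gen RR {Ye} = (JJ :: 'k::field poly fract fls set)"
proof
  show "gen RR {Ye} \<subseteq> (JJ :: 'k::field poly fract fls set)"
    by (rule gen_sub[OF submod_K0]) (simp add: Ye_P P_in)
  have G: "is_submod RR (gen RR {Ye :: 'k poly fract fls})" by (rule gen_submod[OF RR_subring])
  have "(Ye :: 'k poly fract fls) \<in> gen RR {Ye}" by (rule gen_in) (auto simp: NL_def W_def K0_1)
  then show "(JJ :: 'k::field poly fract fls set) \<subseteq> gen RR {Ye}"
    by (intro D0[OF G]) (simp add: Ye_P)
qed

lemma one_RR: "1 \<in> (RR :: 'k::field poly fract fls set)"
  using RR_subring unfolding is_subring_def by blast

lemma I_eq: "gen RR {Ye, Xe * Ye} = (II :: 'k::field poly fract fls set)"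
proof
  show "gen RR {Ye, Xe * Ye} \<subseteq> (II :: 'k::field poly fract fls set)"
    by (rule gen_sub[OF submod_L1]) (use P_in[of 1] K0_L1 XeP_in[of 1] in \<open>auto simp: Ye_P dest: NL_mono\<close>)
  have G: "is_submod RR (gen RR {Ye, Xe * Ye :: 'k poly fract fls})" by (rule gen_submod[OF RR_subring])
  show "(II :: 'k::field poly fract fls set) \<subseteq> gen RR {Ye, Xe * Ye}"
    by (rule D1[OF G]) (auto simp flip: Ye_P intro: gen_in one_RR)
qed

lemma YR_eq: "{Ye * r | r. r \<in> RR} = (JJ :: 'k::field poly fract fls set)"
proof
  show "{Ye * r | r. r \<in> RR} \<subseteq> (JJ :: 'k::field poly fract fls set)"
    using NL_shift[of _ K0 0 1] by (auto simp: Ye_P mult.commute)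
  show "(JJ :: 'k::field poly fract fls set) \<subseteq> {Ye * r | r. r \<in> RR}"
  proof
    fix x :: "'k poly fract fls" assume x: "x \<in> JJ"
    have r: "x * PP (- 1) \<in> RR" using NL_shift[OF x, of "- 1"] by simp
    have "x = Ye * (x * PP (- 1))" unfolding Ye_P using P_inv[of x 1] by (simp add: mult.commute)
    then show "x \<in> {Ye * r | r. r \<in> RR}" using r by blast
  qed
qed

lemma I_form: "{Ye * (kc a + kc b * Xe + m) | a b m. m \<in> M_ex} = (II :: 'k::field poly fract fls set)"
proof
  show "{Ye * (kc a + kc b * Xe + m) | a b m. m \<in> M_ex} \<subseteq> (II :: 'k::field poly fract fls set)"
  proof
    fix x :: "'k poly fract fls" assume "x \<in> {Ye * (kc a + kc b * Xe + m) | a b m. m \<in> M_ex}"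
    then obtain a b m where x: "x = Ye * (kc a + kc b * Xe + m)" and m: "m \<in> W 1" unfolding M_char by blast
    have "kc a + kc b * Xe + m \<in> NL L1 0"
      using m L1I[OF K0I K0I, of a b] unfolding NL_def W_def kc_def' Xe_def' by auto
    from NL_shift[OF this, of 1] show "x \<in> II" unfolding x Ye_P by (simp add: mult.commute)
  qed
  show "(II :: 'k::field poly fract fls set) \<subseteq> {Ye * (kc a + kc b * Xe + m) | a b m. m \<in> M_ex}"
  proof
    fix x :: "'k poly fract fls" assume x: "x \<in> II"
    then have "x $$ 1 \<in> L1" unfolding NL_def by simp
    then obtain u v where uv: "u \<in> K0" "v \<in> K0" "x $$ 1 = u + v * xx" by (elim L1E)
    obtain a where a: "u = Fract [:a:] 1" using uv(1) by (elim K0E)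
    obtain b where b: "v = Fract [:b:] 1" using uv(2) by (elim K0E)
    define m where "m = x * PP (- 1) - kc a - kc b * Xe"
    have "m \<in> W 1" unfolding m_def W_def kc_def' Xe_def' using x uv a b unfolding NL_def W_def
      by (auto simp: shift_nth2)
    then have m: "m \<in> M_ex" unfolding M_char .
    have "x = Ye * (kc a + kc b * Xe + m)" unfolding m_def Ye_P using P_inv[of x 1] by (simp add: mult.commute)
    then show "x \<in> {Ye * (kc a + kc b * Xe + m) | a b m. m \<in> M_ex}" using m by blast
  qed
qed


lemma JJ_II: "(JJ :: 'k::field poly fract fls set) \<subseteq> II" by (rule NL_mono[OF K0_L1])
lemma K0_L2: "(K0 :: 'k::field poly fract set) \<subseteq> L2" using K0_L1 L1_L2 by blast
lemma NL_K0_L2: "(NL K0 d :: 'k::field poly fract fls set) \<subseteq> NL L2 d" by (rule NL_mono[OF K0_L2])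
lemma NL_L1_L2: "(NL L1 d :: 'k::field poly fract fls set) \<subseteq> NL L2 d" by (rule NL_mono[OF L1_L2])

lemma P2_in_JI: "PP 2 \<in> {a * b | a b. a \<in> JJ \<and> b \<in> (II :: 'k::field poly fract fls set)}"
proof -
  have "Ye \<in> (JJ :: 'k poly fract fls set)" "Ye \<in> (II :: 'k poly fract fls set)"
    using P_in[of 1] JJ_II by (auto simp: Ye_P)
  then show ?thesis unfolding P2 by blast
qed

lemma JI_eq: "iprod RR JJ II = (NL L1 2 :: 'k::field poly fract fls set)"
  unfolding iprod_def
proof
  show "gen RR {a * b | a b. a \<in> JJ \<and> b \<in> II} \<subseteq> (NL L1 2 :: 'k::field poly fract fls set)"
  proof (rule gen_sub[OF submod_L1], safe)
    fix a b :: "'k poly fract fls" assume a: "a \<in> JJ" and b: "b \<in> II"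
    have "a * b \<in> W (1 + 1) \<and> (a * b) $$ (1 + 1) = a $$ 1 * b $$ 1" using W_mult[OF NL_W[OF a] NL_W[OF b]] .
    moreover have "a $$ 1 * b $$ 1 \<in> L1" using a b unfolding NL_def by (auto intro: L1_mult)
    ultimately show "a * b \<in> NL L1 2" unfolding NL_def by simp
  qed
  have G: "is_submod RR (gen RR {a * b | a b. a \<in> JJ \<and> b \<in> (II :: 'k poly fract fls set)})"
    by (rule gen_submod[OF RR_subring])
  have Y: "Ye \<in> (JJ :: 'k poly fract fls set)" "Ye \<in> (II :: 'k poly fract fls set)" "Xe * Ye \<in> (II :: 'k poly fract fls set)"
    using P_in[of 1] JJ_II XeP_in[of 1] by (auto simp: Ye_P)
  have e: "Xe * PP 2 = Ye * (Xe * (Ye :: 'k poly fract fls))" unfolding P2 by (simp add: mult_ac)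
  have m1: "PP 2 \<in> {a * b | a b. a \<in> JJ \<and> b \<in> (II :: 'k poly fract fls set)}"
    unfolding P2 using Y by blast
  have m2: "Xe * PP 2 \<in> {a * b | a b. a \<in> JJ \<and> b \<in> (II :: 'k poly fract fls set)}"
    unfolding e using Y by blast
  show "(NL L1 2 :: 'k::field poly fract fls set) \<subseteq> gen RR {a * b | a b. a \<in> JJ \<and> b \<in> II}"
    by (rule D1[OF G gen_in[OF one_RR m1] gen_in[OF one_RR m2]])
qed

lemma JI_fg: "gen RR {PP 2, Xe * PP 2} = (NL L1 2 :: 'k::field poly fract fls set)"
proof
  show "gen RR {PP 2, Xe * PP 2} \<subseteq> (NL L1 2 :: 'k::field poly fract fls set)"
    by (rule gen_sub[OF submod_L1]) (use P_in[of 2] NL_mono[OF K0_L1] XeP_in[of 2] in auto)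
  have G: "is_submod RR (gen RR {PP 2, Xe * PP 2 :: 'k poly fract fls})" by (rule gen_submod[OF RR_subring])
  show "(NL L1 2 :: 'k::field poly fract fls set) \<subseteq> gen RR {PP 2, Xe * PP 2}"
    by (rule D1[OF G]) (auto intro: gen_in one_RR)
qed

lemma IR_eq: "iprod RR II RR = (II :: 'k::field poly fract fls set)"
  unfolding iprod_def
proof
  show "gen RR {a * b | a b. a \<in> II \<and> b \<in> RR} \<subseteq> (II :: 'k::field poly fract fls set)"
  proof (rule gen_sub[OF submod_L1], safe)
    fix a b :: "'k poly fract fls" assume a: "a \<in> II" and b: "b \<in> RR"
    show "a * b \<in> II" using submod_closed(1)[OF submod_L1 b a] by (simp add: mult.commute)
  qed
  show "(II :: 'k::field poly fract fls set) \<subseteq> gen RR {a * b | a b. a \<in> II \<and> b \<in> RR}"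
  proof
    fix x :: "'k poly fract fls" assume "x \<in> II"
    then have "x \<in> {a * b | a b. a \<in> II \<and> b \<in> RR}" using one_RR by force
    then show "x \<in> gen RR {a * b | a b. a \<in> II \<and> b \<in> RR}" by (rule gen_in[OF one_RR])
  qed
qed

lemma I2_eq: "iprod RR II II = (NL L2 2 :: 'k::field poly fract fls set)"
  unfolding iprod_def
proof
  show "gen RR {a * b | a b. a \<in> II \<and> b \<in> II} \<subseteq> (NL L2 2 :: 'k::field poly fract fls set)"
  proof (rule gen_sub[OF submod_L2], safe)
    fix a b :: "'k poly fract fls" assume a: "a \<in> II" and b: "b \<in> II"
    have "a * b \<in> W (1 + 1) \<and> (a * b) $$ (1 + 1) = a $$ 1 * b $$ 1" using W_mult[OF NL_W[OF a] NL_W[OF b]] .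
    moreover have "a $$ 1 * b $$ 1 \<in> L2" using a b unfolding NL_def by (auto intro: L1_L1)
    ultimately show "a * b \<in> NL L2 2" unfolding NL_def by simp
  qed
  have G: "is_submod RR (gen RR {a * b | a b. a \<in> II \<and> b \<in> (II :: 'k poly fract fls set)})"
    by (rule gen_submod[OF RR_subring])
  have Y: "Ye \<in> (II :: 'k poly fract fls set)" "Xe * Ye \<in> (II :: 'k poly fract fls set)"
    using P_in[of 1] JJ_II XeP_in[of 1] by (auto simp: Ye_P)
  have e: "Xe * PP 2 = Ye * (Xe * (Ye :: 'k poly fract fls))" unfolding P2 by (simp add: mult_ac)
  have e2: "Xe * Xe * PP 2 = (Xe * Ye) * (Xe * (Ye :: 'k poly fract fls))" unfolding P2 by (simp add: mult_ac)
  have m1: "PP 2 \<in> {a * b | a b. a \<in> II \<and> b \<in> (II :: 'k poly fract fls set)}"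
    unfolding P2 using Y by blast
  have m2: "Xe * PP 2 \<in> {a * b | a b. a \<in> II \<and> b \<in> (II :: 'k poly fract fls set)}"
    unfolding e using Y by blast
  have m3: "Xe * Xe * PP 2 \<in> {a * b | a b. a \<in> II \<and> b \<in> (II :: 'k poly fract fls set)}"
    unfolding e2 using Y by blast
  show "(NL L2 2 :: 'k::field poly fract fls set) \<subseteq> gen RR {a * b | a b. a \<in> II \<and> b \<in> II}"
    by (rule D2[OF G gen_in[OF one_RR m1] gen_in[OF one_RR m2] gen_in[OF one_RR m3]])
qed

lemma I2_fg: "gen RR {PP 2, Xe * PP 2, Xe * Xe * PP 2} = (NL L2 2 :: 'k::field poly fract fls set)"
proof
  show "gen RR {PP 2, Xe * PP 2, Xe * Xe * PP 2} \<subseteq> (NL L2 2 :: 'k::field poly fract fls set)"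
    by (rule gen_sub[OF submod_L2])
       (use P_in[of 2] NL_K0_L2 NL_L1_L2 XeP_in[of 2] XXP_in[of 2] in auto)
  have G: "is_submod RR (gen RR {PP 2, Xe * PP 2, Xe * Xe * PP 2 :: 'k poly fract fls})" by (rule gen_submod[OF RR_subring])
  show "(NL L2 2 :: 'k::field poly fract fls set) \<subseteq> gen RR {PP 2, Xe * PP 2, Xe * Xe * PP 2}"
    by (rule D2[OF G]) (auto intro: gen_in one_RR)
qed


lemma P_nz: "(PP d :: 'k::field poly fract fls) \<noteq> 0" by simp

lemma NL_nz: "PP d \<in> N \<Longrightarrow> (N :: 'k::field poly fract fls set) \<noteq> {0}"
  using P_nz by force

lemma JJ_fg: "fin_gen RR (JJ :: 'k::field poly fract fls set)"
  unfolding fin_gen_def using J_eq by (metis finite.emptyI finite_insert)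
lemma II_fg: "fin_gen RR (II :: 'k::field poly fract fls set)"
  unfolding fin_gen_def using I_eq by (metis finite.emptyI finite_insert)
lemma JI_fg': "fin_gen RR (NL L1 2 :: 'k::field poly fract fls set)"
  unfolding fin_gen_def using JI_fg by (metis finite.emptyI finite_insert)
lemma I2_fg': "fin_gen RR (NL L2 2 :: 'k::field poly fract fls set)"
  unfolding fin_gen_def using I2_fg by (metis finite.emptyI finite_insert)

lemma tJ: "t_op RR JJ = (JJ :: 'k::field poly fract fls set)"
proof -
  have "t_op RR JJ = v_op RR (JJ :: 'k::field poly fract fls set)"
    by (rule t_fg[OF submod_K0 JJ_fg NL_nz[OF P_in]])
  also have "\<dots> = JJ" unfolding v_op_def colon2 by simp
  finally show ?thesis .
qed

lemma tI: "t_op RR II = (W 1 :: 'k::field poly fract fls set)"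
proof -
  have "t_op RR II = v_op RR (II :: 'k::field poly fract fls set)"
    by (rule t_fg[OF submod_L1 II_fg NL_nz[OF subsetD[OF NL_mono[OF K0_L1] P_in]]])
  also have "\<dots> = W 1" unfolding v_op_def colonL1 colonW by simp
  finally show ?thesis .
qed

lemma tJI: "t_op RR (NL L1 2) = (W 2 :: 'k::field poly fract fls set)"
proof -
  have "t_op RR (NL L1 2) = v_op RR (NL L1 2 :: 'k::field poly fract fls set)"
    by (rule t_fg[OF submod_L1 JI_fg' NL_nz[OF subsetD[OF NL_mono[OF K0_L1] P_in]]])
  also have "\<dots> = W 2" unfolding v_op_def colonL1 colonW by simp
  finally show ?thesis .
qed

lemma tI2: "t_op RR (NL L2 2) = (W 2 :: 'k::field poly fract fls set)"
proof -
  have "t_op RR (NL L2 2) = v_op RR (NL L2 2 :: 'k::field poly fract fls set)"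
    by (rule t_fg[OF submod_L2 I2_fg' NL_nz[OF subsetD[OF NL_K0_L2 P_in]]])
  also have "\<dots> = W 2" unfolding v_op_def colonL2 colonW by simp
  finally show ?thesis .
qed

lemma ipow2: "ipow RR II 2 = (NL L2 2 :: 'k::field poly fract fls set)"
  by (simp add: numeral_2_eq_2 IR_eq I2_eq)

lemma ipow1: "ipow RR II 1 = (II :: 'k::field poly fract fls set)"
  by (simp add: IR_eq)

lemma II_RR: "(II :: 'k::field poly fract fls set) \<subseteq> RR"
  using W_sub_RR[of 1] NL_W by blast

lemma JJ_ne_W1: "(JJ :: 'k::field poly fract fls set) \<noteq> W 1"
proof
  assume h: "(JJ :: 'k::field poly fract fls set) = W 1"
  have "Xe * PP 1 \<in> (W 1 :: 'k poly fract fls set)" using XeP_in NL_W by blast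
  then have "Xe * PP 1 \<in> (JJ :: 'k poly fract fls set)" using h by simp
  then show False unfolding NL_def Xe_def' by (simp add: xx_notin)
qed

lemma not_ftb: "\<not> finite_t_basic (RR :: 'k::field poly fract fls set)"
proof -
  have red: "t_reduction RR JJ (II :: 'k::field poly fract fls set)"
    unfolding t_reduction_def is_ideal_def
  proof (intro conjI exI)
    show "is_submod RR (JJ :: 'k poly fract fls set)" by (rule submod_K0)
    show "(JJ :: 'k poly fract fls set) \<subseteq> RR" using JJ_II II_RR by blast
    show "(JJ :: 'k poly fract fls set) \<subseteq> II" by (rule JJ_II)
    show "t_op RR (iprod RR JJ (ipow RR II 1)) = t_op RR (ipow RR (II :: 'k poly fract fls set) (Suc 1))"
      unfolding ipow1 JI_eq Suc_1 ipow2 tJI tI2 ..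
  qed
  have "\<not> t_basic RR (II :: 'k::field poly fract fls set)"
    unfolding t_basic_def using red tJ tI JJ_ne_W1 by metis
  moreover have "is_ideal RR (II :: 'k::field poly fract fls set)"
    unfolding is_ideal_def using submod_L1 II_RR by blast
  ultimately show ?thesis unfolding finite_t_basic_def
    using II_fg NL_nz[OF subsetD[OF NL_mono[OF K0_L1] P_in]] by blast
qed

lemma quot_field: "is_quotient_field (RR :: 'k::field poly fract fls set)"
  unfolding is_quotient_field_def
proof
  fix x :: "'k poly fract fls"
  define t where "t = 1 + \<bar>fls_subdegree x\<bar>"
  have a: "x * PP t \<in> RR"
  proof -
    have "x * PP t \<in> W 1" unfolding W_def t_def by (auto simp: shift_nth2 intro!: fls_eq0_below_subdegree)
    then show ?thesis using W_sub_RR[of 1] by blast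
  qed
  have b: "PP t \<in> RR" using P_in[of t] NL_W W_sub_RR[of t] unfolding t_def by auto
  have "x = x * PP t / PP t" by simp
  then show "\<exists>a\<in>RR. \<exists>b\<in>RR. b \<noteq> 0 \<and> x = a / b" using a b P_nz by blast
qed


lemma int_closed: "integrally_closed (RR :: 'k::field poly fract fls set)"
  unfolding integrally_closed_def
proof (intro allI impI)
  fix x :: "'k poly fract fls"
  assume "\<exists>n c. (\<forall>i<n. c i \<in> RR) \<and> x ^ n + (\<Sum>i<n. c i * x ^ i) = 0"
  then obtain n c where c: "\<forall>i<n. c i \<in> RR" and eq: "x ^ n + (\<Sum>i<n. c i * x ^ i) = 0" by blast
  have n0: "n \<noteq> 0" using eq by (cases n) auto
  have x0: "x \<in> W 0"
  proof (rule ccontr)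
    assume nW: "x \<notin> W 0"
    define s where "s = fls_subdegree x"
    have xnz: "x \<noteq> 0" using nW unfolding W_def by auto
    have s0: "s < 0" using nW unfolding W_def s_def by (auto intro: fls_eq0_below_subdegree)
    have xs: "x \<in> W s" unfolding W_def s_def by auto
    have "\<forall>i\<in>{..<n}. c i * x ^ i \<in> W (int n * s + 1)"
    proof
      fix i assume i: "i \<in> {..<n}"
      have "c i * x ^ i \<in> W (0 + int i * s)"
        using W_mult[OF NL_W[of _ K0 0] conjunct1[OF W_pow[OF xs]]] c i by auto
      moreover have "int n * s + 1 \<le> 0 + int i * s"
      proof -
        have "int i \<le> int n - 1" using i by auto
        then have "(int n - 1) * s \<le> int i * s" using s0 by (intro mult_right_mono_neg) auto
        then show ?thesis using s0 by (simp add: algebra_simps)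
      qed
      ultimately show "c i * x ^ i \<in> W (int n * s + 1)" using W_mono by blast
    qed
    then have "(\<Sum>i<n. c i * x ^ i) \<in> W (int n * s + 1)" by (intro W_sum) auto
    then have "(\<Sum>i<n. c i * x ^ i) $$ (int n * s) = 0" unfolding W_def by auto
    moreover have "(x ^ n) $$ (int n * s) = (x $$ s) ^ n" using W_pow[OF xs] by blast
    moreover have "(x ^ n + (\<Sum>i<n. c i * x ^ i)) $$ (int n * s) = 0" using eq by simp
    ultimately have "(x $$ s) ^ n = 0" by simp
    then show False using xnz unfolding s_def by simp
  qed
  have "\<forall>i. \<exists>e. i < n \<longrightarrow> (c i) $$ 0 = Fract [:e:] 1"
    using c unfolding NL_def K0_def by blast
  then obtain d where d: "\<And>i. i < n \<Longrightarrow> (c i) $$ 0 = Fract [:d i:] 1" by metis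
  have pw0: "(x ^ i) $$ 0 = (x $$ 0) ^ i" for i using W_pow[OF x0, of i] by simp
  have pwW: "x ^ i \<in> W 0" for i using W_pow[OF x0, of i] by simp
  have "(x ^ n + (\<Sum>i<n. c i * x ^ i)) $$ 0 = 0" using eq by simp
  moreover have "(c i * x ^ i) $$ 0 = Fract [:d i:] 1 * (x $$ 0) ^ i" if "i < n" for i
    using W_mult[OF NL_W[of "c i" K0 0] pwW[of i]] c that d pw0 by auto
  ultimately have "(x $$ 0) ^ n + (\<Sum>i<n. Fract [:d i:] 1 * (x $$ 0) ^ i) = 0"
    by (simp add: fls_nth_sum pw0)
  then have "x $$ 0 \<in> K0" by (rule alg_int)
  then show "x \<in> RR" using x0 unfolding NL_def by simp
qed


theorem mainTheorem13:
  fixes R M I J :: "'k::field poly fract fls set"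
  assumes "M = M_ex" and "R = R_ex"
    and "I = gen R {Ye, Xe * Ye}" and "J = gen R {Ye}"
  shows "is_subring R \<and> is_quotient_field R \<and> integrally_closed R
     \<and> \<not> finite_t_basic R
     \<and> I = {Ye * (kc a + kc b * Xe + m) | a b m. m \<in> M}
     \<and> is_ideal R I \<and> fin_gen R I \<and> I \<noteq> {0}
     \<and> is_ideal R J \<and> J \<subseteq> I
     \<and> t_op R (iprod R J I) = t_op R (ipow R I 2)
     \<and> t_op R J = {Ye * r | r. r \<in> R} \<and> {Ye * r | r. r \<in> R} \<noteq> M
     \<and> t_op R I = M"
proof -
  have R: "R = RR" using assms(2) R_char by simp
  have M: "M = W 1" using assms(1) M_char by simp
  have I: "I = II" using assms(3) I_eq unfolding R by simp
  have J: "J = JJ" using assms(4) J_eq unfolding R by simp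
  have Inz: "(II :: 'k poly fract fls set) \<noteq> {0}" by (rule NL_nz[OF subsetD[OF NL_mono[OF K0_L1] P_in]])
  have Iid: "is_ideal RR (II :: 'k poly fract fls set)" unfolding is_ideal_def using submod_L1 II_RR by blast
  have Jid: "is_ideal RR (JJ :: 'k poly fract fls set)" unfolding is_ideal_def using submod_K0 JJ_II II_RR by blast
  show ?thesis unfolding R M I J
    by (simp add: RR_subring quot_field int_closed not_ftb I_form[unfolded M_char] Iid II_fg Inz Jid JJ_II
      JI_eq ipow2 tJI tI2 tJ YR_eq JJ_ne_W1 tI)
qed

end
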